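(* Let $L$ be a finite lattice and $\Theta$ a lattice congruence on $L$ such that no atom of $L$ is congruent to $\hat0$ and no coatom of $L$ is congruent to $\hat1$. Then the proper part of $L$ is homotopy equivalent to the proper part of $L/\Theta$.
   Context: A lattice congruence is an equivalence relation respecting joins and meets; $L/\Theta$ is the quotient lattice of classes ($[a]\le[b]$ iff some $x\in[a]$, $y\in[b]$ have $x\le y$). $\hat0,\hat1$ are the minimum and maximum; atoms cover $\hat0$, coatoms are covered by $\hat1$. The proper part of a finite lattice is the poset obtained by removing $\hat0$ and $\hat1$; topological statements about a poset refer to its order complex (the simplicial complex of its chains). *)

theory Defs
  imports "HOL-Analysis.Analysis"
begin

text \<open>Geometric realization of the order complex of a finite poset (P, le):
  points are convex combinations (barycentric coordinates f, supported on P)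
  whose support is a chain of (P, le), with the topology induced from the
  product topology on real-valued functions on P.\<close>
definition order_complex_space :: "'a set \<Rightarrow> ('a \<Rightarrow> 'a \<Rightarrow> bool) \<Rightarrow> ('a \<Rightarrow> real) topology" where
  "order_complex_space P le =
     subtopology (product_topology (\<lambda>_. euclideanreal) P)
       {f. f \<in> extensional P \<and> (\<forall>x\<in>P. 0 \<le> f x) \<and> sum f P = 1 \<and>
           (\<forall>x\<in>P. \<forall>y\<in>P. 0 < f x \<and> 0 < f y \<longrightarrow> le x y \<or> le y x)}"

definition lattice_congruence :: "('a::lattice \<times> 'a) set \<Rightarrow> bool" where
  "lattice_congruence R \<longleftrightarrow> equiv UNIV R \<and>
     (\<forall>x y x' y'. (x, y) \<in> R \<and> (x', y') \<in> R \<longrightarrow>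
        (sup x x', sup y y') \<in> R \<and> (inf x x', inf y y') \<in> R)"

definition is_atom :: "'a::bounded_lattice \<Rightarrow> bool" where
  "is_atom a \<longleftrightarrow> bot < a \<and> \<not> (\<exists>z. bot < z \<and> z < a)"

definition is_coatom :: "'a::bounded_lattice \<Rightarrow> bool" where
  "is_coatom a \<longleftrightarrow> a < top \<and> \<not> (\<exists>z. a < z \<and> z < top)"

definition quot_le :: "'a::order set \<Rightarrow> 'a set \<Rightarrow> bool" where
  "quot_le A B \<longleftrightarrow> (\<exists>x\<in>A. \<exists>y\<in>B. x \<le> y)"

definition proper_part :: "'a::bounded_lattice set" where
  "proper_part = UNIV - {bot, top}"

definition quot_proper_part :: "('a::bounded_lattice \<times> 'a) set \<Rightarrow> 'a set set" where
  "quot_proper_part R = (UNIV // R) - {R `` {bot}, R `` {top}}"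

end

theory Submission imports Defs begin

definition ocs_set :: "'a set \<Rightarrow> ('a \<Rightarrow> 'a \<Rightarrow> bool) \<Rightarrow> ('a \<Rightarrow> real) set" where
  "ocs_set P le = {f. f \<in> extensional P \<and> (\<forall>x\<in>P. 0 \<le> f x) \<and> sum f P = 1 \<and>
           (\<forall>x\<in>P. \<forall>y\<in>P. 0 < f x \<and> 0 < f y \<longrightarrow> le x y \<or> le y x)}"

lemma ocs_eq: "order_complex_space P le = subtopology (product_topology (\<lambda>_. euclideanreal) P) (ocs_set P le)"
  unfolding order_complex_space_def ocs_set_def by simp

lemma topspace_ocs: "topspace (order_complex_space P le) = ocs_set P le"
  unfolding ocs_eq by (auto simp: ocs_set_def PiE_def)

lemma proj_cont: "x \<in> P \<Longrightarrow> continuous_map (order_complex_space P le) euclideanreal (\<lambda>p. p x)"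
  unfolding ocs_eq
  by (metis continuous_map_from_subtopology continuous_map_product_projection)

lemma cont_into_ocs:
  assumes "\<And>z. z \<in> P \<Longrightarrow> continuous_map X euclideanreal (\<lambda>x. k x z)"
    and "\<And>x. x \<in> topspace X \<Longrightarrow> k x \<in> ocs_set P le"
  shows "continuous_map X (order_complex_space P le) k"
  unfolding ocs_eq continuous_map_in_subtopology continuous_map_componentwise
  using assms by (auto simp: ocs_set_def)

definition push :: "('a \<Rightarrow> 'b) \<Rightarrow> 'a set \<Rightarrow> 'b set \<Rightarrow> ('a \<Rightarrow> real) \<Rightarrow> ('b \<Rightarrow> real)" where
  "push g P Q p = (\<lambda>y. if y \<in> Q then sum p {x\<in>P. g x = y} else undefined)"

lemma push_in:
  assumes fin: "finite P" "finite Q" and gPQ: "g ` P \<subseteq> Q"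
    and mono: "\<And>x y. x \<in> P \<Longrightarrow> y \<in> P \<Longrightarrow> le x y \<Longrightarrow> le' (g x) (g y)"
    and p: "p \<in> ocs_set P le"
  shows "push g P Q p \<in> ocs_set Q le'"
proof -
  have nn: "\<And>x. x \<in> P \<Longrightarrow> 0 \<le> p x" using p by (auto simp: ocs_set_def)
  have s: "sum (push g P Q p) Q = 1"
  proof -
    have "sum (push g P Q p) Q = (\<Sum>y\<in>Q. sum p {x\<in>P. g x = y})"
      by (simp add: push_def)
    also have "\<dots> = sum p P" using sum.group[OF fin gPQ] by simp
    finally show ?thesis using p by (simp add: ocs_set_def)
  qed
  have pos: "\<exists>x\<in>P. g x = y \<and> 0 < p x" if "y \<in> Q" "0 < push g P Q p y" for y
  proof (rule ccontr)
    assume "\<not> ?thesis"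
    then have "sum p {x\<in>P. g x = y} \<le> 0" using nn by (intro sum_nonpos) force
    then show False using that by (simp add: push_def)
  qed
  show ?thesis
    unfolding ocs_set_def
  proof (intro CollectI conjI ballI impI)
    show "push g P Q p \<in> extensional Q" by (simp add: push_def extensional_def)
    show "0 \<le> push g P Q p y" if "y \<in> Q" for y using that nn by (simp add: push_def) (rule sum_nonneg, auto)
    show "sum (push g P Q p) Q = 1" by (rule s)
    fix y y' assume "y \<in> Q" "y' \<in> Q" "0 < push g P Q p y \<and> 0 < push g P Q p y'"
    then obtain x x' where "x \<in> P" "x' \<in> P" "g x = y" "g x' = y'" "0 < p x" "0 < p x'"
      using pos by meson
    then show "le' y y' \<or> le' y' y" using p mono unfolding ocs_set_def by blast
  qed
qed

lemma push_cont:
  assumes fin: "finite P" "finite Q" and gPQ: "g ` P \<subseteq> Q"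
    and mono: "\<And>x y. x \<in> P \<Longrightarrow> y \<in> P \<Longrightarrow> le x y \<Longrightarrow> le' (g x) (g y)"
  shows "continuous_map (order_complex_space P le) (order_complex_space Q le') (push g P Q)"
proof (rule cont_into_ocs)
  fix z assume "z \<in> Q"
  then show "continuous_map (order_complex_space P le) euclideanreal (\<lambda>p. push g P Q p z)"
    unfolding push_def using fin
    by (auto intro!: continuous_map_sum proj_cont)
next
  fix p assume "p \<in> topspace (order_complex_space P le)"
  then show "push g P Q p \<in> ocs_set Q le'"
    using push_in[OF fin gPQ, of le le'] mono by (simp add: topspace_ocs)
qed

lemma push_comp:
  assumes fin: "finite P" "finite Q" and gPQ: "g ` P \<subseteq> Q"
  shows "push g' Q S (push g P Q p) = push (g' \<circ> g) P S p"
proof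
  fix y
  show "push g' Q S (push g P Q p) y = push (g' \<circ> g) P S p y"
  proof (cases "y \<in> S")
    case True
    have "(\<Sum>z\<in>{z\<in>Q. g' z = y}. push g P Q p z) = (\<Sum>z\<in>{z\<in>Q. g' z = y}. sum p {x\<in>P. g x = z})"
      by (auto simp: push_def intro!: sum.cong)
    also have "\<dots> = sum p (\<Union>z\<in>{z\<in>Q. g' z = y}. {x\<in>P. g x = z})"
      using fin by (intro sum.UNION_disjoint[symmetric]) auto
    also have "(\<Union>z\<in>{z\<in>Q. g' z = y}. {x\<in>P. g x = z}) = {x\<in>P. (g' \<circ> g) x = y}"
      using gPQ by auto
    finally show ?thesis using True by (simp add: push_def)
  qed (simp add: push_def)
qed

lemma push_id:
  assumes "p \<in> ocs_set P le"
  shows "push id P P p = p"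
proof
  fix y show "push id P P p y = p y"
  proof (cases "y \<in> P")
    case True
    then have "{x\<in>P. id x = y} = {y}" by auto
    then show ?thesis using True by (simp add: push_def)
  next
    case False then show ?thesis using assms by (simp add: push_def ocs_set_def extensional_def)
  qed
qed

lemma push_cong:
  assumes "\<And>x. x \<in> P \<Longrightarrow> g x = h x"
  shows "push g P Q = push h P Q"
  unfolding push_def using assms
  by (intro ext) (auto intro!: sum.cong arg_cong[where f="sum _"])


definition Fl :: "'a::order set \<Rightarrow> ('a \<Rightarrow> real) \<Rightarrow> 'a \<Rightarrow> real" where
  "Fl P p x = sum p {y\<in>P. y \<le> x}"
definition Fs :: "'a::order set \<Rightarrow> ('a \<Rightarrow> real) \<Rightarrow> 'a \<Rightarrow> real" where
  "Fs P p x = sum p {y\<in>P. y < x}"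
definition Aw :: "'a::order set \<Rightarrow> real \<Rightarrow> ('a \<Rightarrow> real) \<Rightarrow> 'a \<Rightarrow> real" where
  "Aw P t p x = max 0 (min (Fl P p x) (1 - t) - Fs P p x)"
definition Hm :: "'a::order set \<Rightarrow> ('a \<Rightarrow> 'a) \<Rightarrow> ('a \<Rightarrow> 'a) \<Rightarrow> real \<times> ('a \<Rightarrow> real) \<Rightarrow> 'a \<Rightarrow> real" where
  "Hm P g h = (\<lambda>(t,p) z. if z \<in> P then (\<Sum>x\<in>{x\<in>P. g x = z}. Aw P t p x) + (\<Sum>x\<in>{x\<in>P. h x = z}. p x - Aw P t p x) else undefined)"

lemma Fl_split: "finite P \<Longrightarrow> x \<in> P \<Longrightarrow> Fl P p x = Fs P p x + p x"
proof -
  assume f: "finite P" and x: "x \<in> P"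
  have "{y\<in>P. y \<le> x} = insert x {y\<in>P. y < x}" using x by auto
  then show ?thesis using f by (simp add: Fl_def Fs_def)
qed

lemma Aw_bounds:
  assumes "finite P" "x \<in> P" "0 \<le> p x"
  shows "0 \<le> Aw P t p x" "Aw P t p x \<le> p x"
  using Fl_split[OF assms(1,2), of p] assms(3) by (auto simp: Aw_def)

lemma Fl_le_Fs:
  assumes "finite P" "x < x'" "p \<in> ocs_set P le"
  shows "Fl P p x \<le> Fs P p x'"
  unfolding Fl_def Fs_def
  using assms by (intro sum_mono2) (auto simp: ocs_set_def intro: le_less_trans)

lemma Hm_in:
  fixes P :: "'a::order set"
  assumes fin: "finite P" and gP: "g ` P \<subseteq> P" and hP: "h ` P \<subseteq> P"
    and gm: "\<And>x y. x \<in> P \<Longrightarrow> y \<in> P \<Longrightarrow> x \<le> y \<Longrightarrow> g x \<le> g y"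
    and hm: "\<And>x y. x \<in> P \<Longrightarrow> y \<in> P \<Longrightarrow> x \<le> y \<Longrightarrow> h x \<le> h y"
    and gh: "\<And>x. x \<in> P \<Longrightarrow> g x \<le> h x"
    and p: "p \<in> ocs_set P (\<le>)"
  shows "Hm P g h (t,p) \<in> ocs_set P (\<le>)"
proof -
  have nn: "\<And>x. x \<in> P \<Longrightarrow> 0 \<le> p x" using p by (auto simp: ocs_set_def)
  let ?A = "Aw P t p" and ?B = "\<lambda>x. p x - Aw P t p x"
  have AB: "0 \<le> ?A x" "?A x \<le> p x" if "x \<in> P" for x
    using Aw_bounds[OF fin that, of p t] nn[OF that] by auto
  have s: "sum (Hm P g h (t,p)) P = 1"
  proof -
    have "sum (Hm P g h (t,p)) P = (\<Sum>z\<in>P. sum ?A {x\<in>P. g x = z}) + (\<Sum>z\<in>P. sum ?B {x\<in>P. h x = z})"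
      by (simp add: Hm_def sum.distrib)
    also have "\<dots> = sum ?A P + sum ?B P" using sum.group[OF fin fin gP, of ?A] sum.group[OF fin fin hP, of ?B] by simp
    also have "\<dots> = sum p P" by (simp add: sum_subtractf)
    finally show ?thesis using p by (simp add: ocs_set_def)
  qed
  define act where "act x r \<longleftrightarrow> (if r then 0 < ?B x else 0 < ?A x)" for x r
  define img where "img x r = (if r then h x else g x)" for x r
  have pos: "\<exists>x\<in>P. \<exists>r. img x r = z \<and> act x r" if "z \<in> P" "0 < Hm P g h (t,p) z" for z
  proof (rule ccontr)
    assume c: "\<not> ?thesis"
    have "sum ?A {x\<in>P. g x = z} \<le> 0"
    proof (rule sum_nonpos)
      fix x assume x: "x \<in> {x\<in>P. g x = z}"
      then have "img x False = z" by (simp add: img_def)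
      then have "\<not> act x False" using c x by blast
      then show "?A x \<le> 0" by (simp add: act_def)
    qed
    moreover have "sum ?B {x\<in>P. h x = z} \<le> 0"
    proof (rule sum_nonpos)
      fix x assume x: "x \<in> {x\<in>P. h x = z}"
      then have "img x True = z" by (simp add: img_def)
      then have "\<not> act x True" using c x by blast
      then show "?B x \<le> 0" by (simp add: act_def)
    qed
    ultimately show False using that by (simp add: Hm_def)
  qed
  have actp: "0 < p x" if "x \<in> P" "act x r" for x r
    using that AB[OF that(1)] by (cases r) (auto simp: act_def)
  have key: "img x r \<le> img x' r' \<or> img x' r' \<le> img x r"
    if "x \<in> P" "x' \<in> P" "x \<le> x'" "act x r" "act x' r'" for x x' r r'
  proof (cases "x = x'")
    case True then show ?thesis using gh[OF that(1)] by (auto simp: img_def)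
  next
    case False
    then have lt: "x < x'" using that by simp
    have "\<not> (r \<and> \<not> r')"
    proof
      assume "r \<and> \<not> r'"
      then have "0 < ?B x" "0 < ?A x'" using that by (auto simp: act_def)
      moreover have "Fl P p x \<le> Fs P p x'" using Fl_le_Fs[OF fin lt p] .
      moreover note Fl_split[OF fin that(1), of p] Fl_split[OF fin that(2), of p]
      ultimately show False by (auto simp: Aw_def)
    qed
    moreover have "g x \<le> h x'" using gh[OF that(1)] hm[OF that(1-3)] by (rule order_trans)
    ultimately show ?thesis using gm[OF that(1-3)] hm[OF that(1-3)]
      unfolding img_def by (cases r; cases r'; simp)
  qed
  show ?thesis
    unfolding ocs_set_def
  proof (intro CollectI conjI ballI impI)
    show "Hm P g h (t,p) \<in> extensional P" by (simp add: Hm_def extensional_def)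
    show "0 \<le> Hm P g h (t,p) y" if "y \<in> P" for y
    proof -
      have "0 \<le> sum ?A {x\<in>P. g x = y}" by (rule sum_nonneg) (use AB in auto)
      moreover have "0 \<le> sum ?B {x\<in>P. h x = y}" by (rule sum_nonneg) (use AB in auto)
      ultimately show ?thesis using that by (simp add: Hm_def)
    qed
    show "sum (Hm P g h (t,p)) P = 1" by (rule s)
    fix y y' assume "y \<in> P" "y' \<in> P" "0 < Hm P g h (t,p) y \<and> 0 < Hm P g h (t,p) y'"
    then obtain x r x' r' where xx: "x \<in> P" "x' \<in> P" "img x r = y" "img x' r' = y'" "act x r" "act x' r'"
      using pos by meson
    then have "x \<le> x' \<or> x' \<le> x" using actp p unfolding ocs_set_def by blast
    then show "y \<le> y' \<or> y' \<le> y" using key xx by blast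
  qed
qed


lemma Hm_apply: "Hm P g h q z = (if z \<in> P then (\<Sum>x\<in>{x\<in>P. g x = z}. Aw P (fst q) (snd q) x)
   + (\<Sum>x\<in>{x\<in>P. h x = z}. snd q x - Aw P (fst q) (snd q) x) else undefined)"
  by (cases q) (simp add: Hm_def)

lemma Hm_cont:
  fixes P :: "'a::order set"
  assumes fin: "finite P" and gP: "g ` P \<subseteq> P" and hP: "h ` P \<subseteq> P"
    and gm: "\<And>x y. x \<in> P \<Longrightarrow> y \<in> P \<Longrightarrow> x \<le> y \<Longrightarrow> g x \<le> g y"
    and hm: "\<And>x y. x \<in> P \<Longrightarrow> y \<in> P \<Longrightarrow> x \<le> y \<Longrightarrow> h x \<le> h y"
    and gh: "\<And>x. x \<in> P \<Longrightarrow> g x \<le> h x"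
  shows "continuous_map (prod_topology (top_of_set {0..1}) (order_complex_space P (\<le>)))
           (order_complex_space P (\<le>)) (Hm P g h)"
proof (rule cont_into_ocs)
  let ?X = "prod_topology (top_of_set {0..1::real}) (order_complex_space P (\<le>))"
  have cfst: "continuous_map ?X euclideanreal fst"
    by (metis continuous_map_fst continuous_map_in_subtopology)
  have csnd: "continuous_map ?X euclideanreal (\<lambda>q. snd q y)" if "y \<in> P" for y
    using continuous_map_compose[OF continuous_map_snd proj_cont[OF that]] by (simp add: o_def)
  have cA: "continuous_map ?X euclideanreal (\<lambda>q. Aw P (fst q) (snd q) x)" for x
    unfolding Aw_def Fl_def Fs_def
    using fin cfst csnd by (intro continuous_intros) auto
  fix z assume "z \<in> P"
  then show "continuous_map ?X euclideanreal (\<lambda>q. Hm P g h q z)"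
    unfolding Hm_apply using fin cA csnd by (simp, intro continuous_intros) auto
next
  fix q assume "q \<in> topspace (prod_topology (top_of_set {0..1::real}) (order_complex_space P (\<le>)))"
  then have "snd q \<in> ocs_set P (\<le>)" by (auto simp: topspace_ocs)
  then show "Hm P g h q \<in> ocs_set P (\<le>)"
    using Hm_in[OF assms, of "snd q" "fst q"] by simp
qed

lemma Hm_0:
  fixes P :: "'a::order set"
  assumes fin: "finite P" and p: "p \<in> ocs_set P (\<le>)"
  shows "Hm P g h (0,p) = push g P P p"
proof -
  have nn: "\<And>x. x \<in> P \<Longrightarrow> 0 \<le> p x" using p by (auto simp: ocs_set_def)
  have "Aw P 0 p x = p x" if "x \<in> P" for x
  proof -
    have "Fl P p x \<le> sum p P" unfolding Fl_def using fin nn by (intro sum_mono2) auto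
    then have "Fl P p x \<le> 1" using p by (simp add: ocs_set_def)
    then show ?thesis using Fl_split[OF fin that, of p] nn[OF that] by (simp add: Aw_def)
  qed
  then show ?thesis unfolding Hm_def push_def by (intro ext) auto
qed

lemma Hm_1:
  fixes P :: "'a::order set"
  assumes fin: "finite P" and p: "p \<in> ocs_set P (\<le>)"
  shows "Hm P g h (1,p) = push h P P p"
proof -
  have nn: "\<And>x. x \<in> P \<Longrightarrow> 0 \<le> p x" using p by (auto simp: ocs_set_def)
  have "Aw P 1 p x = 0" if "x \<in> P" for x
  proof -
    have "0 \<le> Fs P p x" unfolding Fs_def using nn by (intro sum_nonneg) auto
    then show ?thesis by (simp add: Aw_def)
  qed
  then show ?thesis unfolding Hm_def push_def by (intro ext) auto
qed

lemma push_homotopic: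
  fixes P :: "'a::order set"
  assumes fin: "finite P" and gP: "g ` P \<subseteq> P" and hP: "h ` P \<subseteq> P"
    and gm: "\<And>x y. x \<in> P \<Longrightarrow> y \<in> P \<Longrightarrow> x \<le> y \<Longrightarrow> g x \<le> g y"
    and hm: "\<And>x y. x \<in> P \<Longrightarrow> y \<in> P \<Longrightarrow> x \<le> y \<Longrightarrow> h x \<le> h y"
    and gh: "\<And>x. x \<in> P \<Longrightarrow> g x \<le> h x"
  shows "homotopic_with (\<lambda>_. True) (order_complex_space P (\<le>)) (order_complex_space P (\<le>))
           (push g P P) (push h P P)"
proof -
  have "homotopic_with (\<lambda>_. True) (order_complex_space P (\<le>)) (order_complex_space P (\<le>))
           (\<lambda>p. Hm P g h (0,p)) (\<lambda>p. Hm P g h (1,p))"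
    unfolding homotopic_with_def using Hm_cont[OF assms] by blast
  then show ?thesis
    by (rule homotopic_with_eq) (auto simp: topspace_ocs Hm_0[OF fin] Hm_1[OF fin])
qed


lemma lc_equiv: "lattice_congruence R \<Longrightarrow> equiv UNIV R"
  by (simp add: lattice_congruence_def)

lemma lc_inf: "lattice_congruence R \<Longrightarrow> (x,y) \<in> R \<Longrightarrow> (x',y') \<in> R \<Longrightarrow> (inf x x', inf y y') \<in> R"
  by (simp add: lattice_congruence_def)

lemma lc_sup: "lattice_congruence R \<Longrightarrow> (x,y) \<in> R \<Longrightarrow> (x',y') \<in> R \<Longrightarrow> (sup x x', sup y y') \<in> R"
  by (simp add: lattice_congruence_def)

lemma lc_refl: "lattice_congruence R \<Longrightarrow> (x,x) \<in> R"
  by (meson UNIV_I equiv_def lc_equiv refl_onD)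

lemma lc_sym: "lattice_congruence R \<Longrightarrow> (x,y) \<in> R \<Longrightarrow> (y,x) \<in> R"
  by (meson equiv_def lc_equiv symD)

lemma bot_class:
  fixes R :: "('a::{finite, bounded_lattice} \<times> 'a) set"
  assumes lc: "lattice_congruence R" and at: "\<forall>a. is_atom a \<longrightarrow> (a, bot) \<notin> R"
    and x: "(x, bot) \<in> R"
  shows "x = bot"
proof (rule ccontr)
  assume "x \<noteq> bot"
  then have ne: "{z. bot < z \<and> z \<le> x} \<noteq> {}" using bot.not_eq_extremum by blast
  obtain m where m: "m \<in> {z. bot < z \<and> z \<le> x}" and mmin: "\<forall>b\<in>{z. bot < z \<and> z \<le> x}. b \<le> m \<longrightarrow> m = b"
    using finite_has_minimal[OF _ ne] by auto
  have "is_atom m" unfolding is_atom_def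
  proof (intro conjI notI)
    show "bot < m" using m by simp
    assume "\<exists>z. bot < z \<and> z < m"
    then obtain z where "bot < z" "z < m" by blast
    then show False using mmin m by fastforce
  qed
  moreover have "(inf m x, inf m bot) \<in> R" using lc_inf[OF lc lc_refl[OF lc] x] .
  then have "(m, bot) \<in> R" using m by (simp add: inf_absorb1)
  ultimately show False using at by blast
qed

lemma top_class:
  fixes R :: "('a::{finite, bounded_lattice} \<times> 'a) set"
  assumes lc: "lattice_congruence R" and at: "\<forall>a. is_coatom a \<longrightarrow> (a, top) \<notin> R"
    and x: "(x, top) \<in> R"
  shows "x = top"
proof (rule ccontr)
  assume "x \<noteq> top"
  then have ne: "{z. z < top \<and> x \<le> z} \<noteq> {}" using top.not_eq_extremum by blast
  obtain m where m: "m \<in> {z. z < top \<and> x \<le> z}" and mmax: "\<forall>b\<in>{z. z < top \<and> x \<le> z}. m \<le> b \<longrightarrow> m = b"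
    using finite_has_maximal[OF _ ne] by auto
  have "is_coatom m" unfolding is_coatom_def
  proof (intro conjI notI)
    show "m < top" using m by simp
    assume "\<exists>z. m < z \<and> z < top"
    then obtain z where "m < z" "z < top" by blast
    then show False using mmax m by fastforce
  qed
  moreover have "(sup m x, sup m top) \<in> R" using lc_sup[OF lc lc_refl[OF lc] x] .
  then have "(m, top) \<in> R" using m by (simp add: sup_absorb1)
  ultimately show False using at by blast
qed

definition cmin :: "'a::order set \<Rightarrow> 'a" where
  "cmin C = (SOME m. m \<in> C \<and> (\<forall>y\<in>C. m \<le> y))"

lemma cmin:
  fixes R :: "('a::{finite, bounded_lattice} \<times> 'a) set"
  assumes lc: "lattice_congruence R" and C: "C \<in> UNIV // R"
  shows "cmin C \<in> C \<and> (\<forall>y\<in>C. cmin C \<le> y)"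
proof -
  obtain x where Cx: "C = R `` {x}" using C by (auto elim: quotientE)
  have ne: "C \<noteq> {}" using Cx lc_refl[OF lc] by blast
  obtain m where m: "m \<in> C" and mmin: "\<forall>b\<in>C. b \<le> m \<longrightarrow> m = b"
    using finite_has_minimal[OF _ ne] by auto
  have "\<forall>y\<in>C. m \<le> y"
  proof
    fix y assume y: "y \<in> C"
    have "(inf x x, inf m y) \<in> R" using lc_inf[OF lc] m y Cx by blast
    then have "inf m y \<in> C" using Cx by simp
    then have "m = inf m y" using mmin by simp
    then show "m \<le> y" by (metis inf.cobounded2)
  qed
  then have "\<exists>m. m \<in> C \<and> (\<forall>y\<in>C. m \<le> y)" using m by blast
  then show ?thesis unfolding cmin_def by (rule someI_ex)
qed

lemma class_eq:
  fixes R :: "('a::{finite, bounded_lattice} \<times> 'a) set"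
  assumes lc: "lattice_congruence R" and C: "C \<in> UNIV // R" and y: "y \<in> C"
  shows "C = R `` {y}"
proof -
  obtain x where Cx: "C = R `` {x}" using C by (auto elim: quotientE)
  then have "(x, y) \<in> R" using y by simp
  then show ?thesis using Cx equiv_class_eq[OF lc_equiv[OF lc]] by simp
qed

theorem corollary2p4:
  fixes R :: "('a::{finite, bounded_lattice} \<times> 'a) set"
  assumes "lattice_congruence R"
    and "\<forall>a. is_atom a \<longrightarrow> (a, bot) \<notin> R"
    and "\<forall>a. is_coatom a \<longrightarrow> (a, top) \<notin> R"
  shows "order_complex_space (proper_part :: 'a set) (\<le>)
           homotopy_equivalent_space
         order_complex_space (quot_proper_part R) quot_le"
proof -
  note lc = assms(1)
  define P where "P = (proper_part :: 'a set)"
  define Q where "Q = quot_proper_part R"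
  define \<phi> where "\<phi> x = R `` {x}" for x :: 'a
  define \<psi> where "\<psi> C = cmin C" for C :: "'a set"
  have finP: "finite P" by simp
  have finQ: "finite Q" by simp
  have Pd: "x \<in> P \<longleftrightarrow> x \<noteq> bot \<and> x \<noteq> top" for x by (auto simp: P_def proper_part_def)
  have Qd: "C \<in> Q \<longleftrightarrow> C \<in> UNIV // R \<and> C \<noteq> R `` {bot} \<and> C \<noteq> R `` {top}" for C
    by (auto simp: Q_def quot_proper_part_def)
  have phiP: "\<phi> ` P \<subseteq> Q"
  proof
    fix C assume "C \<in> \<phi> ` P"
    then obtain x where x: "x \<in> P" "C = R `` {x}" by (auto simp: \<phi>_def)
    have q: "C \<in> UNIV // R" using x by (simp add: quotientI)
    have xC: "x \<in> C" using x lc_refl[OF lc] by simp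
    have "C \<noteq> R `` {bot}"
    proof
      assume "C = R `` {bot}"
      then have "(x, bot) \<in> R" using xC lc_sym[OF lc] by auto
      then show False using bot_class[OF lc assms(2)] x Pd by blast
    qed
    moreover have "C \<noteq> R `` {top}"
    proof
      assume "C = R `` {top}"
      then have "(x, top) \<in> R" using xC lc_sym[OF lc] by auto
      then show False using top_class[OF lc assms(3)] x Pd by blast
    qed
    ultimately show "C \<in> Q" using q Qd by blast
  qed
  have psiQ: "\<psi> ` Q \<subseteq> P"
  proof
    fix y assume "y \<in> \<psi> ` Q"
    then obtain C where C: "C \<in> Q" "y = cmin C" by (auto simp: \<psi>_def)
    then have q: "C \<in> UNIV // R" using Qd by blast
    have yC: "y \<in> C" using cmin[OF lc q] C by simp
    have "C = R `` {y}" using class_eq[OF lc q yC] .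
    then show "y \<in> P" using C Qd Pd by blast
  qed
  have phim: "quot_le (\<phi> x) (\<phi> y)" if "x \<le> y" for x y
    unfolding quot_le_def \<phi>_def using that lc_refl[OF lc] by blast
  have psim: "\<psi> A \<le> \<psi> B" if AB: "A \<in> Q" "B \<in> Q" "quot_le A B" for A B
  proof -
    have qA: "A \<in> UNIV // R" and qB: "B \<in> UNIV // R" using AB Qd by auto
    obtain x y where xy: "x \<in> A" "y \<in> B" "x \<le> y" using AB unfolding quot_le_def by blast
    have a: "\<psi> A \<in> A" "\<forall>z\<in>A. \<psi> A \<le> z" using cmin[OF lc qA] by (auto simp: \<psi>_def)
    have b: "\<psi> B \<in> B" using cmin[OF lc qB] by (auto simp: \<psi>_def)
    have "(\<psi> A, x) \<in> R" using class_eq[OF lc qA a(1)] xy by auto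
    moreover have "(\<psi> B, y) \<in> R" using class_eq[OF lc qB b] xy by auto
    ultimately have "(inf (\<psi> A) (\<psi> B), inf x y) \<in> R" by (rule lc_inf[OF lc])
    then have "(inf (\<psi> A) (\<psi> B), x) \<in> R" using xy by (simp add: inf_absorb1)
    then have "inf (\<psi> A) (\<psi> B) \<in> A" using class_eq[OF lc qA xy(1)] lc_sym[OF lc] by auto
    then have "\<psi> A \<le> inf (\<psi> A) (\<psi> B)" using a by blast
    then show ?thesis by (simp add: le_inf_iff)
  qed
  have psiphi_le: "\<psi> (\<phi> x) \<le> x" for x
  proof -
    have "\<phi> x \<in> UNIV // R" by (simp add: \<phi>_def quotientI)
    moreover have "x \<in> \<phi> x" using lc_refl[OF lc] by (simp add: \<phi>_def)
    ultimately show ?thesis using cmin[OF lc] by (auto simp: \<psi>_def)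
  qed
  have phipsi: "\<phi> (\<psi> C) = C" if "C \<in> Q" for C
  proof -
    have q: "C \<in> UNIV // R" using that Qd by blast
    show ?thesis using class_eq[OF lc q] cmin[OF lc q] by (simp add: \<phi>_def \<psi>_def)
  qed
  let ?f = "push \<phi> P Q" and ?g = "push \<psi> Q P"
  have cf: "continuous_map (order_complex_space P (\<le>)) (order_complex_space Q quot_le) ?f"
    by (rule push_cont[OF finP finQ phiP]) (rule phim)
  have cg: "continuous_map (order_complex_space Q quot_le) (order_complex_space P (\<le>)) ?g"
    by (rule push_cont[OF finQ finP psiQ]) (rule psim)
  have h1: "homotopic_with (\<lambda>_. True) (order_complex_space P (\<le>)) (order_complex_space P (\<le>))
              (push (\<psi> \<circ> \<phi>) P P) (push id P P)"
  proof (rule push_homotopic[OF finP])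
    show "(\<psi> \<circ> \<phi>) ` P \<subseteq> P" using phiP psiQ by auto
    show "id ` P \<subseteq> P" by simp
    show "(\<psi> \<circ> \<phi>) x \<le> (\<psi> \<circ> \<phi>) y" if "x \<in> P" "y \<in> P" "x \<le> y" for x y
    proof -
      have "\<phi> x \<in> Q" "\<phi> y \<in> Q" using phiP that by auto
      then show ?thesis using psim[OF _ _ phim[OF that(3)]] by simp
    qed
    show "id x \<le> id y" if "x \<le> y" for x y using that by simp
    show "(\<psi> \<circ> \<phi>) x \<le> id x" for x using psiphi_le by simp
  qed
  have h1': "homotopic_with (\<lambda>_. True) (order_complex_space P (\<le>)) (order_complex_space P (\<le>))
              (?g \<circ> ?f) id"
    by (rule homotopic_with_eq[OF h1])
       (auto simp: topspace_ocs push_comp[OF finP finQ phiP] push_id)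
  have h2: "homotopic_with (\<lambda>_. True) (order_complex_space Q quot_le) (order_complex_space Q quot_le)
              (?f \<circ> ?g) id"
  proof (rule homotopic_with_equal)
    show "continuous_map (order_complex_space Q quot_le) (order_complex_space Q quot_le) (?f \<circ> ?g)"
      by (rule continuous_map_compose[OF cg cf])
    fix p assume "p \<in> topspace (order_complex_space Q quot_le)"
    then have p: "p \<in> ocs_set Q quot_le" by (simp add: topspace_ocs)
    have "(?f \<circ> ?g) p = push (\<phi> \<circ> \<psi>) Q Q p" by (simp add: push_comp[OF finQ finP psiQ])
    also have "\<dots> = push id Q Q p" using phipsi by (simp add: push_cong[of Q "\<phi> \<circ> \<psi>" id])
    also have "\<dots> = p" by (rule push_id[OF p])
    finally show "(?f \<circ> ?g) p = id p" by simp
  qed auto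
  show ?thesis unfolding homotopy_equivalent_space_def P_def[symmetric] Q_def[symmetric]
    using cf cg h1' h2 by blast
qed

end
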